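(* Let $S_1 = A_3^*$ be the set of nonnegative integers whose base-$3$ expansion contains no digit $2$, and for $n\ge 2$ let $S_n$ be the set of positive integers $k$ such that every exponent in the prime factorization of $k$ (i.e. $v_p(k)$ for each prime $p\mid k$) lies in $S_{n-1}$. Then the asymptotic density $d(S_n)$ tends to $1$ as $n\to\infty$, but there is no $n$ for which $d(S_n)=1$.
   Context: Thus $S_2$ is the greedy geometric-progression-free set $G_3^*$ (Rankin's characterization). The asymptotic density of $A\subseteq\mathbb{N}$ is $d(A)=\lim_{N\to\infty}\frac{|A\cap\{1,\dots,N\}|}{N}$. *)

theory Defs
  imports Complex_Main "HOL-Computational_Algebra.Primes"
begin

definition A3 :: "nat set" where
  "A3 = {k. \<forall>i::nat. (k div 3 ^ i) mod 3 \<noteq> 2}"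

text \<open>S 1 = A_3^*; S (n+1) = positive k all of whose prime exponents lie in S n.
  The index 0 is unused (set to the empty set).\<close>
fun S :: "nat \<Rightarrow> nat set" where
  "S 0 = {}"
| "S (Suc 0) = A3"
| "S (Suc (Suc n)) =
     {k. k > 0 \<and> (\<forall>p \<in> prime_factors k. multiplicity p k \<in> S (Suc n))}"

definition has_density :: "nat set \<Rightarrow> real \<Rightarrow> bool" where
  "has_density A d \<longleftrightarrow>
     (\<lambda>N. real (card (A \<inter> {1..N})) / real N) \<longlonglongrightarrow> d"

end

theory Submission
  imports Defs
begin


lemma card_multiples:
  assumes "c > 0"
  shows "card {k\<in>{1..N}. c dvd k} = N div c"
proof -
  have "{k\<in>{1..N}. c dvd k} = (\<lambda>i. c*i) ` {1..N div c}"
  proof (rule set_eqI, rule iffI)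
    fix k assume "k \<in> {k\<in>{1..N}. c dvd k}"
    then obtain i where k: "k = c*i" "1 \<le> c*i" "c*i \<le> N" by auto
    hence "1 \<le> i" by (cases i) auto
    moreover have "i \<le> N div c" using k assms by (metis div_le_mono nonzero_mult_div_cancel_left not_gr0)
    ultimately show "k \<in> (\<lambda>i. c*i) ` {1..N div c}" using k by auto
  next
    fix k assume "k \<in> (\<lambda>i. c*i) ` {1..N div c}"
    then obtain i where i0: "i \<in> {1..N div c}" "k = c*i" by blast
    hence i: "k = c*i" "1 \<le> i" "i \<le> N div c" by auto
    have "c * i \<le> c * (N div c)" using i by simp
    also have "\<dots> \<le> N" by simp
    finally show "k \<in> {k\<in>{1..N}. c dvd k}" using i assms by auto
  qed
  moreover have "inj_on (\<lambda>i. c*i) {1..N div c}" using assms by (auto simp: inj_on_def)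
  ultimately show ?thesis by (simp add: card_image)
qed

lemma card_multiples_le:
  assumes "c > 0"
  shows "real (card {k\<in>{1..N}. c dvd k}) \<le> real N / real c"
  unfolding card_multiples[OF assms] by (rule of_nat_div_le_of_nat)

lemma sum_inv_sq:
  assumes "a \<ge> 1"
  shows "(\<Sum>d\<in>{a+1..N}. 1 / (real d)^2) \<le> 1 / real a"
proof -
  have "N \<ge> a \<Longrightarrow> (\<Sum>d\<in>{a+1..N}. 1 / (real d)^2) \<le> 1 / real a - 1 / real N" for N
  proof (induction N)
    case 0 thus ?case using assms by simp
  next
    case (Suc N)
    show ?case
    proof (cases "Suc N = a")
      case True thus ?thesis by simp
    next
      case False
      hence "N \<ge> a" using Suc by simp
      have N1: "real N \<ge> 1" using \<open>N \<ge> a\<close> assms by simp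
      have "{a+1..Suc N} = insert (Suc N) {a+1..N}" using \<open>N \<ge> a\<close> by auto
      hence "(\<Sum>d\<in>{a+1..Suc N}. 1 / (real d)^2) = 1/(real (Suc N))^2 + (\<Sum>d\<in>{a+1..N}. 1 / (real d)^2)"
        by simp
      also have "\<dots> \<le> 1/(real (Suc N))^2 + (1 / real a - 1 / real N)" using Suc.IH \<open>N \<ge> a\<close> by simp
      also have "\<dots> \<le> 1 / real a - 1 / real (Suc N)"
      proof -
        have e: "1 / real N - 1 / (real N + 1) = 1 / (real N * (real N + 1))"
          using N1 by (simp add: field_simps)
        have "1/(real N + 1)^2 \<le> 1 / (real N * (real N + 1))"
          using N1 unfolding power2_eq_square by (intro divide_left_mono mult_right_mono) auto
        hence h: "1/(real N + 1)^2 \<le> 1 / real N - 1 / (real N + 1)" using e by simp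
        have h': "1/(1 + real N)^2 \<le> 1/real N - 1/(1 + real N)" using h by (simp add: add.commute)
        show ?thesis unfolding of_nat_Suc using h' by linarith
      qed
      finally show ?thesis .
    qed
  qed
  moreover have "N < a \<Longrightarrow> {a+1..N} = {}" by auto
  ultimately show ?thesis using assms
    by (cases "N \<ge> a") (auto, smt (verit) divide_nonneg_nonneg of_nat_0_le_iff)
qed

lemma sum_inv_pow:
  assumes "a \<ge> 1" "j \<ge> 2"
  shows "(\<Sum>d\<in>{a+1..N}. 1 / (real d)^j) \<le> 1 / (2^(j-2) * real a)"
proof -
  have "(\<Sum>d\<in>{a+1..N}. 1 / (real d)^j) \<le> (\<Sum>d\<in>{a+1..N}. (1/2^(j-2)) * (1 / (real d)^2))"
  proof (rule sum_mono)
    fix d assume "d \<in> {a+1..N}"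
    hence d2: "real d \<ge> 2" using assms by auto
    have "(real d)^j = (real d)^(j-2) * (real d)^2" using assms(2)
      by (metis le_add_diff_inverse2 power_add)
    moreover have "(real d)^(j-2) \<ge> 2^(j-2)" using d2 by (intro power_mono) auto
    ultimately have "(real d)^j \<ge> 2^(j-2) * (real d)^2" using d2 by (simp add: mult_right_mono)
    thus "1 / (real d)^j \<le> (1/2^(j-2)) * (1 / (real d)^2)" using d2
      by (simp add: frac_le)
  qed
  also have "\<dots> = (1/2^(j-2)) * (\<Sum>d\<in>{a+1..N}. 1 / (real d)^2)" by (simp add: sum_distrib_left)
  also have "\<dots> \<le> (1/2^(j-2)) * (1 / real a)" using sum_inv_sq[OF assms(1)]
    by (intro mult_left_mono) auto
  finally show ?thesis by simp
qed

lemma card_bad: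
  assumes "a \<ge> 1" "j \<ge> 2"
  shows "real (card {k\<in>{1..N}. \<exists>d>a. d^j dvd k}) \<le> real N / (2^(j-2) * real a)"
proof -
  have sub: "{k\<in>{1..N}. \<exists>d>a. d^j dvd k} \<subseteq> (\<Union>d\<in>{a+1..N}. {k\<in>{1..N}. d^j dvd k})"
  proof
    fix k assume "k \<in> {k\<in>{1..N}. \<exists>d>a. d^j dvd k}"
    then obtain d where k: "1 \<le> k" "k \<le> N" "d > a" "d^j dvd k" by auto
    have "d \<le> d^j" using k assms by (simp add: self_le_power)
    also have "\<dots> \<le> k" using k by (simp add: dvd_imp_le)
    finally show "k \<in> (\<Union>d\<in>{a+1..N}. {k\<in>{1..N}. d^j dvd k})" using k by auto
  qed
  have "card {k\<in>{1..N}. \<exists>d>a. d^j dvd k} \<le> card (\<Union>d\<in>{a+1..N}. {k\<in>{1..N}. d^j dvd k})"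
    by (rule card_mono[OF _ sub]) auto
  also have "\<dots> \<le> (\<Sum>d\<in>{a+1..N}. card {k\<in>{1..N}. d^j dvd k})" by (rule card_UN_le) simp
  finally have "real (card {k\<in>{1..N}. \<exists>d>a. d^j dvd k}) \<le> (\<Sum>d\<in>{a+1..N}. real (card {k\<in>{1..N}. d^j dvd k}))"
    by (subst of_nat_sum[symmetric], subst of_nat_le_iff)
  also have "\<dots> \<le> (\<Sum>d\<in>{a+1..N}. real N * (1 / (real d)^j))"
  proof (rule sum_mono)
    fix d assume "d \<in> {a+1..N}"
    hence "d^j > 0" by auto
    from card_multiples_le[OF this, of N] show "real (card {k\<in>{1..N}. d^j dvd k}) \<le> real N * (1 / (real d)^j)"
      by simp
  qed
  also have "\<dots> = real N * (\<Sum>d\<in>{a+1..N}. 1 / (real d)^j)" by (simp add: sum_distrib_left)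
  also have "\<dots> \<le> real N * (1 / (2^(j-2) * real a))"
    by (intro mult_left_mono sum_inv_pow assms) auto
  finally show ?thesis by simp
qed



definition ratio :: "nat set \<Rightarrow> nat \<Rightarrow> real" where
  "ratio A N = real (card (A \<inter> {1..N})) / real N"

lemma periodic_shift:
  fixes q :: nat
  assumes "\<forall>k\<ge>1. (k \<in> T \<longleftrightarrow> k + Q \<in> T)"
    and k1: "k \<ge> 1"
  shows "(k \<in> T \<longleftrightarrow> k + q*Q \<in> T)"
proof (induction q)
  case 0 thus ?case by simp
next
  case (Suc q)
  have "k + Suc q * Q = (k + q*Q) + Q" by simp
  moreover have "k + q*Q \<ge> 1" using k1 by simp
  ultimately show ?case using Suc assms by metis
qed

lemma periodic_card:
  assumes "\<forall>k\<ge>1. (k \<in> T \<longleftrightarrow> k + Q \<in> T)"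
  shows "card (T \<inter> {1..q*Q}) = q * card (T \<inter> {1..Q})"
proof (induction q)
  case 0 thus ?case by simp
next
  case (Suc q)
  have "{1..Suc q * Q} = {1..q*Q} \<union> {q*Q+1..q*Q+Q}" by auto
  hence e: "T \<inter> {1..Suc q * Q} = (T \<inter> {1..q*Q}) \<union> (T \<inter> {q*Q+1..q*Q+Q})" by auto
  have img: "T \<inter> {q*Q+1..q*Q+Q} = (\<lambda>k. k + q*Q) ` (T \<inter> {1..Q})"
  proof (rule set_eqI, rule iffI)
    fix x assume x: "x \<in> T \<inter> {q*Q+1..q*Q+Q}"
    hence "x - q*Q \<ge> 1" "x - q*Q \<le> Q" "x = (x - q*Q) + q*Q" by auto
    moreover have "x - q*Q \<in> T" using periodic_shift[OF assms, where k="x - q*Q" and q=q] \<open>x - q*Q \<ge> 1\<close> x \<open>x = (x - q*Q) + q*Q\<close>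
      by auto
    ultimately show "x \<in> (\<lambda>k. k + q*Q) ` (T \<inter> {1..Q})" by (intro image_eqI[of _ _ "x - q*Q"]) auto
  next
    fix x assume "x \<in> (\<lambda>k. k + q*Q) ` (T \<inter> {1..Q})"
    then obtain k where k: "x = k + q*Q" "k \<in> T" "1 \<le> k" "k \<le> Q" by auto
    thus "x \<in> T \<inter> {q*Q+1..q*Q+Q}" using periodic_shift[OF assms, where k=k and q=q] by auto
  qed
  have "card (T \<inter> {1..Suc q * Q}) = card (T \<inter> {1..q*Q}) + card (T \<inter> {q*Q+1..q*Q+Q})"
    unfolding e by (rule card_Un_disjoint) auto
  also have "card (T \<inter> {q*Q+1..q*Q+Q}) = card (T \<inter> {1..Q})"
    unfolding img by (rule card_image) (auto simp: inj_on_def)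
  finally show ?case using Suc.IH by simp
qed

lemma card_mono_N: "(N::nat) \<le> M \<Longrightarrow> card (T \<inter> {1..N}) \<le> card (T \<inter> {1..M})"
proof -
  assume "N \<le> M"
  have "finite (T \<inter> {1..M})" by (rule finite_Int, rule disjI2) simp
  thus ?thesis using \<open>N \<le> M\<close> by (intro card_mono) auto
qed

lemma periodic_convergent:
  assumes Q: "Q > 0" and per: "\<forall>k\<ge>1. (k \<in> T \<longleftrightarrow> k + Q \<in> T)"
  shows "convergent (ratio T)"
proof -
  define c where "c = card (T \<inter> {1..Q})"
  have bnd: "real c / real Q - real c / real N \<le> ratio T N \<and> ratio T N \<le> real c / real Q + real c / real N"
    if N: "N \<ge> 1" for N
  proof -
    define q where "q = N div Q"
    have qQ: "q * Q \<le> N" unfolding q_def by simp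
    have qQ2: "N < Suc q * Q" unfolding q_def using Q
      by (metis add.commute dividend_less_div_times mult_Suc)
    have lo: "q * c \<le> card (T \<inter> {1..N})"
      using card_mono_N[OF qQ, of T] periodic_card[OF per, of q] unfolding c_def by simp
    have hi: "card (T \<inter> {1..N}) \<le> Suc q * c"
      using card_mono_N[of N "Suc q * Q" T] qQ2 periodic_card[OF per, of "Suc q"] unfolding c_def by simp
    have Np: "real N > 0" using N by simp
    have Qp: "real Q > 0" using Q by simp
    have q1: "real q \<le> real N / real Q" using qQ Qp
      by (simp add: pos_le_divide_eq) (metis of_nat_le_iff of_nat_mult)
    have q2: "real N / real Q - 1 < real q"
    proof -
      have "real N < (real q + 1) * real Q" using qQ2 by (metis of_nat_Suc of_nat_less_iff of_nat_mult add.commute)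
      hence "real N / real Q < real q + 1" using Qp by (simp add: divide_less_eq)
      thus ?thesis by linarith
    qed
    have X1: "real (card (T \<inter> {1..N})) \<le> (real N / real Q + 1) * real c"
    proof -
      have "real (card (T \<inter> {1..N})) \<le> (real q + 1) * real c" using hi
        by (metis of_nat_Suc of_nat_le_iff of_nat_mult add.commute)
      also have "\<dots> \<le> (real N / real Q + 1) * real c" using q1 by (intro mult_right_mono) auto
      finally show ?thesis .
    qed
    have X2: "(real N / real Q - 1) * real c \<le> real (card (T \<inter> {1..N}))"
    proof -
      have "(real N / real Q - 1) * real c \<le> real q * real c" using q2 by (intro mult_right_mono) auto
      also have "\<dots> \<le> real (card (T \<inter> {1..N}))" using lo by (metis of_nat_le_iff of_nat_mult)
      finally show ?thesis .
    qed
    have "ratio T N \<le> (real N / real Q + 1) * real c / real N"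
      unfolding ratio_def using X1 Np by (simp add: divide_right_mono)
    also have "\<dots> = real c / real Q + real c / real N" using Np Qp by (simp add: field_simps)
    finally have A1: "ratio T N \<le> real c / real Q + real c / real N" .
    have "real c / real Q - real c / real N = (real N / real Q - 1) * real c / real N"
      using Np Qp by (simp add: field_simps)
    also have "\<dots> \<le> ratio T N" unfolding ratio_def using X2 Np by (simp add: divide_right_mono)
    finally show ?thesis using A1 by simp
  qed
  have l0: "(\<lambda>N. real c / real N) \<longlonglongrightarrow> 0" by (rule lim_const_over_n)
  have t1: "(\<lambda>N. real c / real Q - real c / real N) \<longlonglongrightarrow> real c / real Q"
    using tendsto_diff[OF tendsto_const l0] by simp
  have t2: "(\<lambda>N. real c / real Q + real c / real N) \<longlonglongrightarrow> real c / real Q"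
    using tendsto_add[OF tendsto_const l0] by simp
  have ev1: "eventually (\<lambda>N. real c / real Q - real c / real N \<le> ratio T N) sequentially"
    using bnd by (intro eventually_sequentiallyI[of 1]) auto
  have ev2: "eventually (\<lambda>N. ratio T N \<le> real c / real Q + real c / real N) sequentially"
    using bnd by (intro eventually_sequentiallyI[of 1]) auto
  have "ratio T \<longlonglongrightarrow> real c / real Q"
    by (rule tendsto_sandwich[OF ev1 ev2 t1 t2])
  thus ?thesis unfolding convergent_def by blast
qed

lemma approx_convergent:
  assumes "\<And>e. e > 0 \<Longrightarrow> \<exists>T. convergent (ratio T) \<and> (\<forall>N\<ge>1. \<bar>ratio A N - ratio T N\<bar> \<le> e)"
  shows "convergent (ratio A)"
proof -
  have "Cauchy (ratio A)"
  proof (rule metric_CauchyI)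
    fix e :: real assume e: "e > 0"
    then obtain T where T: "convergent (ratio T)" "\<forall>N\<ge>1. \<bar>ratio A N - ratio T N\<bar> \<le> e/4"
      using assms[of "e/4"] by auto
    have "Cauchy (ratio T)" using T(1) by (rule convergent_Cauchy)
    then obtain M where M: "\<forall>m\<ge>M. \<forall>n\<ge>M. dist (ratio T m) (ratio T n) < e/4"
      using metric_CauchyD[of "ratio T" "e/4"] e by auto
    show "\<exists>M. \<forall>m\<ge>M. \<forall>n\<ge>M. dist (ratio A m) (ratio A n) < e"
    proof (intro exI[of _ "max M 1"] allI impI)
      fix m n assume mn: "max M 1 \<le> m" "max M 1 \<le> n"
      have "dist (ratio T m) (ratio T n) < e/4" using M mn by auto
      moreover have "\<bar>ratio A m - ratio T m\<bar> \<le> e/4" "\<bar>ratio A n - ratio T n\<bar> \<le> e/4"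
        using T(2) mn by auto
      ultimately show "dist (ratio A m) (ratio A n) < e" using e
        unfolding dist_real_def by linarith
    qed
  qed
  thus ?thesis by (rule Cauchy_convergent)
qed



definition G :: "nat set \<Rightarrow> nat set" where
  "G E = {k. 0 < k \<and> (\<forall>p\<in>prime_factors k. multiplicity p k \<in> E)}"

definition TT :: "nat set \<Rightarrow> nat \<Rightarrow> nat set" where
  "TT E m = {k. 0 < k \<and> (\<forall>p e'. prime p \<longrightarrow> p \<le> m \<longrightarrow> 1 \<le> e' \<longrightarrow> e' \<le> m \<longrightarrow>
       p^e' dvd k \<longrightarrow> \<not> p^(Suc e') dvd k \<longrightarrow> e' \<in> E)}"

lemma mult_facts:
  fixes p k :: nat
  assumes "prime p" "k > 0"
  shows "p ^ multiplicity p k dvd k" "\<not> p ^ Suc (multiplicity p k) dvd k"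
proof -
  show "p ^ multiplicity p k dvd k" by (rule multiplicity_dvd)
  have nu: "\<not> is_unit p" using assms(1) not_prime_unit by blast
  show "\<not> p ^ Suc (multiplicity p k) dvd k"
    using power_dvd_iff_le_multiplicity[of k p "Suc (multiplicity p k)"] nu assms(2) by simp
qed

lemma TT_periodic:
  assumes "m \<ge> 1"
  shows "\<forall>k\<ge>1. (k \<in> TT E m \<longleftrightarrow> k + fact m ^ Suc m \<in> TT E m)"
proof (intro allI impI)
  fix k :: nat assume k: "k \<ge> 1"
  have dv: "p ^ a dvd k + fact m ^ Suc m \<longleftrightarrow> p ^ a dvd k" if "prime p" "p \<le> m" "a \<le> Suc m" for p a
  proof -
    have "p dvd fact m" using that prime_ge_1_nat[of p] by (intro dvd_fact) auto
    hence "p ^ a dvd fact m ^ a" by (rule dvd_power_same)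
    also have "fact m ^ a dvd (fact m :: nat) ^ Suc m" using that(3) by (rule le_imp_power_dvd)
    finally have "p ^ a dvd fact m ^ Suc m" .
    thus ?thesis by (metis add.commute dvd_add_right_iff)
  qed
  show "k \<in> TT E m \<longleftrightarrow> k + fact m ^ Suc m \<in> TT E m"
    using k by (auto simp del: power_Suc simp: TT_def dv)
qed

lemma G_sub_TT: "G E \<subseteq> TT E m"
proof
  fix k assume k: "k \<in> G E"
  hence k0: "k > 0" unfolding G_def by auto
  show "k \<in> TT E m" unfolding TT_def
  proof (intro CollectI conjI allI impI k0)
    fix p e' :: nat assume h: "prime p" "p \<le> m" "1 \<le> e'" "e' \<le> m" "p^e' dvd k" "\<not> p^(Suc e') dvd k"
    have "multiplicity p k = e'" using h by (intro multiplicity_eqI) auto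
    moreover have "p dvd p^e'" using h(3) by (cases e') auto
    hence "p dvd k" using h(5) by (rule dvd_trans)
    hence "p \<in> prime_factors k" using h(1) k0 by (simp add: in_prime_factors_iff)
    ultimately show "e' \<in> E" using k unfolding G_def by auto
  qed
qed

lemma TT_minus_G:
  assumes "1 \<in> E"
  shows "TT E m - G E \<subseteq> {k. \<exists>d>m. d^2 dvd k} \<union> {k. \<exists>d>1. d^(Suc m) dvd k}"
proof
  fix k assume k: "k \<in> TT E m - G E"
  hence k0: "k > 0" unfolding TT_def by auto
  then obtain p where p: "p \<in> prime_factors k" "multiplicity p k \<notin> E"
    using k unfolding G_def by auto
  define u where "u = multiplicity p k"
  have pr: "prime p" "p dvd k" using p(1) by (auto simp: in_prime_factors_iff)
  have u1: "u \<ge> 1" unfolding u_def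
    using power_dvd_iff_le_multiplicity[of k p 1] pr k0 prime_gt_1_nat[OF pr(1)] by auto
  have u2: "u \<ge> 2" using u1 p(2) assms unfolding u_def by (cases "u = 1") (auto simp: u_def)
  have d1: "p ^ u dvd k" "\<not> p ^ Suc u dvd k" using mult_facts[OF pr(1) k0] unfolding u_def by auto
  have p1: "p > 1" using pr(1) prime_gt_1_nat by blast
  show "k \<in> {k. \<exists>d>m. d^2 dvd k} \<union> {k. \<exists>d>1. d^(Suc m) dvd k}"
  proof (cases "p \<le> m \<and> u \<le> m")
    case True
    hence "u \<in> E" using k d1 u1 pr(1) unfolding TT_def by auto
    thus ?thesis using p(2) unfolding u_def by simp
  next
    case False
    hence "\<not> p \<le> m \<or> \<not> u \<le> m" by auto
    thus ?thesis
    proof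
      assume "\<not> p \<le> m"
      have "p^2 dvd p^u" using u2 by (rule le_imp_power_dvd)
      hence "p^2 dvd k" using d1(1) by (rule dvd_trans)
      thus ?thesis using \<open>\<not> p \<le> m\<close> by auto
    next
      assume "\<not> u \<le> m"
      have "p^(Suc m) dvd p^u" using \<open>\<not> u \<le> m\<close> by (intro le_imp_power_dvd) auto
      hence "p^(Suc m) dvd k" using d1(1) by (rule dvd_trans)
      thus ?thesis using p1 by auto
    qed
  qed
qed

lemma pow2_ge: "(m::nat) \<ge> 1 \<Longrightarrow> real m \<le> 2^(m-1)"
proof (induction m)
  case 0 thus ?case by simp
next
  case (Suc m)
  show ?case
  proof (cases "m = 0")
    case True thus ?thesis by simp
  next
    case False
    hence "real m \<le> 2^(m-1)" using Suc by simp
    moreover have "(2::real)^(Suc m - 1) = 2 * 2^(m-1)" using False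
      by (metis Suc_pred diff_Suc_1 not_gr0 power_Suc)
    moreover have "(1::real) \<le> 2^(m-1)" by simp
    moreover have "real (Suc m) = real m + 1" by simp
    ultimately show ?thesis by linarith
  qed
qed

lemma G_convergent:
  assumes "1 \<in> E"
  shows "convergent (ratio (G E))"
proof (rule approx_convergent)
  fix e :: real assume e: "e > 0"
  obtain m :: nat where m: "2 / e < real m" using reals_Archimedean2 by blast
  have m1: "m \<ge> 1" using m e by (metis divide_pos_pos less_numeral_extra(1) not_less_iff_gr_or_eq of_nat_0 zero_less_numeral less_one not_le)
  have me: "2 / real m < e" using m e m1 by (simp add: field_simps)
  show "\<exists>T. convergent (ratio T) \<and> (\<forall>N\<ge>1. \<bar>ratio (G E) N - ratio T N\<bar> \<le> e)"
  proof (intro exI conjI allI impI)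
    show "convergent (ratio (TT E m))"
      by (rule periodic_convergent[OF _ TT_periodic[OF m1]]) simp
  next
    fix N :: nat assume N: "N \<ge> 1"
    let ?I = "{1..N}"
    have fin: "finite (TT E m \<inter> ?I)" by simp
    have sub: "G E \<inter> ?I \<subseteq> TT E m \<inter> ?I" using G_sub_TT by auto
    have eq: "card (TT E m \<inter> ?I) = card (G E \<inter> ?I) + card ((TT E m - G E) \<inter> ?I)"
    proof -
      have "TT E m \<inter> ?I = (G E \<inter> ?I) \<union> ((TT E m - G E) \<inter> ?I)" using sub by auto
      moreover have "card ((G E \<inter> ?I) \<union> ((TT E m - G E) \<inter> ?I)) = card (G E \<inter> ?I) + card ((TT E m - G E) \<inter> ?I)"
        by (rule card_Un_disjoint) auto
      ultimately show ?thesis by simp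
    qed
    have bsub: "(TT E m - G E) \<inter> ?I \<subseteq> {k\<in>?I. \<exists>d>m. d^2 dvd k} \<union> {k\<in>?I. \<exists>d>1. d^(Suc m) dvd k}"
      using TT_minus_G[OF assms, of m] by auto
    have "card ((TT E m - G E) \<inter> ?I) \<le> card ({k\<in>?I. \<exists>d>m. d^2 dvd k} \<union> {k\<in>?I. \<exists>d>1. d^(Suc m) dvd k})"
      by (rule card_mono[OF _ bsub]) auto
    also have "\<dots> \<le> card {k\<in>?I. \<exists>d>m. d^2 dvd k} + card {k\<in>?I. \<exists>d>1. d^(Suc m) dvd k}"
      by (rule card_Un_le)
    finally have c1: "real (card ((TT E m - G E) \<inter> ?I)) \<le> real (card {k\<in>?I. \<exists>d>m. d^2 dvd k}) + real (card {k\<in>?I. \<exists>d>1. d^(Suc m) dvd k})"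
      by linarith
    have b1: "real (card {k\<in>?I. \<exists>d>m. d^2 dvd k}) \<le> real N / real m"
      using card_bad[OF m1, of 2 N] by simp
    have b2: "real (card {k\<in>?I. \<exists>d>1. d^(Suc m) dvd k}) \<le> real N / 2^(m-1)"
      using card_bad[of 1 "Suc m" N] m1 by simp
    have "real N / 2^(m-1) \<le> real N / real m" using pow2_ge[OF m1] m1
      by (intro divide_left_mono) auto
    hence c2: "real (card ((TT E m - G E) \<inter> ?I)) \<le> 2 * real N / real m" using c1 b1 b2 by simp
    have Np: "real N > 0" using N by simp
    have "\<bar>ratio (G E) N - ratio (TT E m) N\<bar> = real (card ((TT E m - G E) \<inter> ?I)) / real N"
      unfolding ratio_def using eq by (simp add: diff_divide_distrib[symmetric])
    also have "\<dots> \<le> (2 * real N / real m) / real N" using Np by (intro divide_right_mono[OF c2]) simp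
    also have "\<dots> = 2 / real m" using Np by simp
    finally show "\<bar>ratio (G E) N - ratio (TT E m) N\<bar> \<le> e" using me by simp
  qed
qed



lemma S_G: "S (Suc (Suc n)) = G (S (Suc n))"
  by (simp add: G_def)

lemma one_A3: "1 \<in> A3"
proof -
  have "(1 div 3^i) mod 3 \<noteq> (2::nat)" for i
  proof -
    have "(1::nat) div 3^i \<le> 1" by (rule div_le_dividend)
    hence "(1 div 3^i) mod 3 \<le> (1::nat)" using mod_less_eq_dividend order_trans by blast
    thus ?thesis by simp
  qed
  thus ?thesis unfolding A3_def by simp
qed

lemma two_notin_A3: "2 \<notin> A3"
  unfolding A3_def by (auto intro: exI[of _ 0])

lemma small_in_S: "1 \<le> e \<Longrightarrow> e \<le> n \<Longrightarrow> e \<in> S (Suc n)"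
proof (induction n arbitrary: e)
  case 0 thus ?case by simp
next
  case (Suc n)
  have e0: "e > 0" using Suc.prems by simp
  show ?case unfolding S_G G_def
  proof (intro CollectI conjI ballI e0)
    fix p assume p: "p \<in> prime_factors e"
    hence pr: "prime p" "p dvd e" by (auto simp: in_prime_factors_iff)
    define u where "u = multiplicity p e"
    have u1: "u \<ge> 1" unfolding u_def
      using power_dvd_iff_le_multiplicity[of e p 1] pr e0 prime_gt_1_nat[OF pr(1)] by auto
    have "p ^ u dvd e" unfolding u_def by (rule multiplicity_dvd)
    hence "p ^ u \<le> e" using e0 by (rule dvd_imp_le)
    moreover have "2 ^ u \<le> p ^ u" using prime_ge_2_nat[OF pr(1)] by (rule power_mono) simp
    moreover have "u < 2 ^ u" by (rule less_exp)
    ultimately have "u < e" by linarith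
    hence "u \<le> n" using Suc.prems by simp
    thus "multiplicity p e \<in> S (Suc n)" using Suc.IH[of u] u1 unfolding u_def by simp
  qed
qed

lemma one_in_S: "1 \<in> S (Suc n)"
  using one_A3 small_in_S[of 1 n] by (cases n) auto

lemma exists_notin_S: "n \<ge> 1 \<Longrightarrow> \<exists>e\<ge>1. e \<notin> S n"
proof (induction n rule: nat_induct_at_least)
  case base
  show ?case using two_notin_A3 by (intro exI[of _ 2]) simp
next
  case (Suc n)
  then obtain e where e: "e \<ge> 1" "e \<notin> S n" by blast
  obtain m where m: "n = Suc m" using Suc.hyps by (cases n) auto
  have mf: "multiplicity 2 ((2::nat)^e) \<notin> S n" using e(2) by simp
  have pf: "2 \<in> prime_factors ((2::nat)^e)" using e(1)
    by (simp add: in_prime_factors_iff)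
  have "2^e \<notin> S (Suc n)" unfolding m S_G G_def using mf pf unfolding m by blast
  moreover have "2^e \<ge> (1::nat)" by simp
  ultimately show ?case by blast
qed

lemma A3_pow_card: "card (A3 \<inter> {..<3^j}) \<le> 2^j"
proof (induction j)
  case 0
  have "A3 \<inter> {..<3^0} \<subseteq> {0}" by auto
  hence "card (A3 \<inter> {..<3^0}) \<le> card {0::nat}" by (intro card_mono) auto
  thus ?case by simp
next
  case (Suc j)
  have sub: "A3 \<inter> {..<3^Suc j} \<subseteq> (\<lambda>(a,b). 3*a+b) ` ((A3 \<inter> {..<3^j}) \<times> {0,1})"
  proof
    fix k assume k: "k \<in> A3 \<inter> {..<3^Suc j}"
    have "(k div 3^0) mod 3 \<noteq> 2" using k unfolding A3_def by blast
    hence km: "k mod 3 \<in> {0,1}" by auto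
    have "(k div 3) \<in> A3" unfolding A3_def
    proof (rule CollectI, rule allI)
      fix i
      have "(k div 3^(Suc i)) mod 3 \<noteq> 2" using k unfolding A3_def by blast
      moreover have "k div 3^(Suc i) = k div 3 div 3^i" by (simp add: div_mult2_eq)
      ultimately show "(k div 3 div 3^i) mod 3 \<noteq> 2" by simp
    qed
    moreover have "k div 3 < 3^j" using k by auto
    moreover have "k = 3 * (k div 3) + k mod 3" by simp
    ultimately show "k \<in> (\<lambda>(a,b). 3*a+b) ` ((A3 \<inter> {..<3^j}) \<times> {0,1})"
      using km by (intro image_eqI[of _ _ "(k div 3, k mod 3)"]) auto
  qed
  have "card (A3 \<inter> {..<3^Suc j}) \<le> card ((\<lambda>(a,b). 3*a+b) ` ((A3 \<inter> {..<3^j}) \<times> {0::nat,1}))"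
    by (rule card_mono[OF _ sub]) simp
  also have "\<dots> \<le> card ((A3 \<inter> {..<3^j}) \<times> {0::nat,1})" by (rule card_image_le) simp
  also have "\<dots> = card (A3 \<inter> {..<3^j}) * 2" by (simp add: card_cartesian_product)
  also have "\<dots> \<le> 2^j * 2" using Suc.IH by simp
  finally show ?case by simp
qed

lemma A3_count: "3^J \<le> N \<Longrightarrow> N < 3^(Suc j) \<Longrightarrow> real (card (A3 \<inter> {1..N})) \<le> 2 * (2/3)^J * real N"
proof (induction j arbitrary: N)
  case 0
  have "J = 0"
  proof (rule ccontr)
    assume "J \<noteq> 0"
    hence "(3::nat)^1 \<le> 3^J" by (intro power_increasing) auto
    thus False using 0 by simp
  qed
  have "card (A3 \<inter> {1..N}) \<le> card {1..N}" by (intro card_mono) auto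
  thus ?case using \<open>J = 0\<close> by simp
next
  case (Suc j)
  show ?case
  proof (cases "N < 3^Suc j")
    case True thus ?thesis using Suc by blast
  next
    case False
    hence N1: "3^Suc j \<le> N" by simp
    have "J < Suc (Suc j)"
      using Suc.prems power_less_imp_less_exp[of "3::nat" J "Suc (Suc j)"] by linarith
    hence JJ: "J \<le> Suc j" by simp
    have "A3 \<inter> {1..N} \<subseteq> A3 \<inter> {..<3^Suc (Suc j)}" using Suc.prems by auto
    hence "card (A3 \<inter> {1..N}) \<le> card (A3 \<inter> {..<3^Suc (Suc j)})" by (intro card_mono) auto
    also have "\<dots> \<le> 2^Suc (Suc j)" by (rule A3_pow_card)
    finally have c: "real (card (A3 \<inter> {1..N})) \<le> 2^Suc (Suc j)"
      by (metis of_nat_le_iff of_nat_numeral of_nat_power)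
    have "(2::real)^Suc (Suc j) = 2 * ((2/3)^Suc j * 3^Suc j)"
      by (simp add: power_divide)
    also have "\<dots> \<le> 2 * ((2/3)^J * real N)"
    proof -
      have "(2/3::real)^Suc j \<le> (2/3)^J" using JJ by (intro power_decreasing) auto
      moreover have "(3::real)^Suc j \<le> real N" using N1 by (metis of_nat_le_iff of_nat_numeral of_nat_power)
      ultimately show ?thesis by (intro mult_left_mono mult_mono) auto
    qed
    finally have X: "(2::real)^Suc (Suc j) \<le> 2 * ((2/3)^J * real N)" .
    show ?thesis unfolding mult.assoc using c X by linarith
  qed
qed

lemma A3_density: "ratio A3 \<longlonglongrightarrow> 0"
proof (rule LIMSEQ_I)
  fix r :: real assume r: "r > 0"
  have "(\<lambda>J. (2/3::real)^J) \<longlonglongrightarrow> 0" by (rule LIMSEQ_realpow_zero) auto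
  then obtain J where J: "\<forall>n\<ge>J. norm ((2/3::real)^n - 0) < r/2" using LIMSEQ_D[of _ 0 "r/2"] r
    by (metis half_gt_zero)
  hence J': "(2/3::real)^J < r/2" by auto
  show "\<exists>no. \<forall>n\<ge>no. norm (ratio A3 n - 0) < r"
  proof (intro exI[of _ "3^J"] allI impI)
    fix N assume N: "(3::nat)^J \<le> N"
    have Np: "real N > 0" using N by (metis gr0I le_zero_eq of_nat_0_less_iff power_not_zero zero_neq_numeral)
    have "real (card (A3 \<inter> {1..N})) \<le> 2 * (2/3)^J * real N"
    proof -
      have a: "N < 2^N" by (rule less_exp)
      have b: "(2::nat)^N \<le> 3^N" by (rule power_mono) auto
      have c: "(3::nat)^N \<le> 3^Suc N" by (rule power_increasing) auto
      have "N < 3^Suc N" using a b c by linarith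
      thus ?thesis using A3_count[OF N, of N] by blast
    qed
    hence "ratio A3 N \<le> 2 * (2/3)^J" unfolding ratio_def using Np by (simp add: divide_le_eq)
    moreover have "ratio A3 N \<ge> 0" unfolding ratio_def by simp
    ultimately show "norm (ratio A3 N - 0) < r" using J' by simp
  qed
qed




lemma conv_S: "n \<ge> 1 \<Longrightarrow> convergent (ratio (S n))"
proof -
  assume n: "n \<ge> 1"
  show ?thesis
  proof (cases "n = 1")
    case True thus ?thesis using A3_density unfolding convergent_def by auto
  next
    case False
    have "n = Suc (Suc (n - 2))" using n False by simp
    then obtain m where m: "n = Suc (Suc m)" by blast
    show ?thesis unfolding m S_G by (rule G_convergent[OF one_in_S])
  qed
qed

lemma ratio_le1: "ratio A N \<le> 1"
proof -
  have "card (A \<inter> {1..N}) \<le> card {1..N}" by (intro card_mono) auto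
  hence "real (card (A \<inter> {1..N})) \<le> real N" by simp
  thus ?thesis unfolding ratio_def by (cases "N = 0") (auto simp: divide_le_eq)
qed

lemma card_split:
  "card {1..(N::nat)} = card (A \<inter> {1..N}) + card ({1..N} - A)"
proof -
  have "{1..N} = (A \<inter> {1..N}) \<union> ({1..N} - A)" by auto
  moreover have "card ((A \<inter> {1..N}) \<union> ({1..N} - A)) = card (A \<inter> {1..N}) + card ({1..N} - A)"
    by (rule card_Un_disjoint) auto
  ultimately show ?thesis by simp
qed

lemma lower_bound:
  assumes n: "n \<ge> 1" and N: "N \<ge> 1"
  shows "1 - 1/2^(n-1) \<le> ratio (S (Suc (Suc n))) N"
proof -
  let ?G = "S (Suc (Suc n))"
  let ?I = "{1..N}"
  have sub: "?I - ?G \<subseteq> {k\<in>?I. \<exists>d>1. d^(Suc n) dvd k}"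
  proof
    fix k assume k: "k \<in> ?I - ?G"
    hence k0: "k > 0" by auto
    then obtain p where p: "p \<in> prime_factors k" "multiplicity p k \<notin> S (Suc n)"
      using k unfolding S_G G_def by auto
    define u where "u = multiplicity p k"
    have pr: "prime p" "p dvd k" using p(1) by (auto simp: in_prime_factors_iff)
    have u1: "u \<ge> 1" unfolding u_def
      using power_dvd_iff_le_multiplicity[of k p 1] pr k0 prime_gt_1_nat[OF pr(1)] by auto
    have "\<not> u \<le> n" using small_in_S[of u n] u1 p(2) unfolding u_def by auto
    hence "p^(Suc n) dvd p^u" by (intro le_imp_power_dvd) auto
    moreover have "p^u dvd k" unfolding u_def by (rule multiplicity_dvd)
    ultimately have "p^(Suc n) dvd k" by (rule dvd_trans)
    thus "k \<in> {k\<in>?I. \<exists>d>1. d^(Suc n) dvd k}" using k prime_gt_1_nat[OF pr(1)] by auto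
  qed
  have "card (?I - ?G) \<le> card {k\<in>?I. \<exists>d>1. d^(Suc n) dvd k}" by (rule card_mono[OF _ sub]) auto
  hence "real (card (?I - ?G)) \<le> real (card {k\<in>?I. \<exists>d>1. d^(Suc n) dvd k})" by simp
  also have "\<dots> \<le> real N / (2^(Suc n - 2) * real (1::nat))" by (rule card_bad) (use n in auto)
  finally have b: "real (card (?I - ?G)) \<le> real N / 2^(n-1)" by simp
  have "real N = real (card (?G \<inter> ?I)) + real (card (?I - ?G))"
    using card_split[of N ?G] by simp
  hence c: "real N - real N / 2^(n-1) \<le> real (card (?G \<inter> ?I))" using b by linarith
  have Np: "real N > 0" using N by simp
  have "1 - 1/2^(n-1) = (real N - real N / 2^(n-1)) / real N" using Np by (simp add: field_simps)
  also have "\<dots> \<le> ratio ?G N" unfolding ratio_def using Np by (intro divide_right_mono c) simp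
  finally show ?thesis .
qed

lemma div_lower: "(c::nat) > 0 \<Longrightarrow> real N / real c - 1 \<le> real (N div c)"
proof -
  assume c: "c > 0"
  have "real N / real c = real (N div c) + real (N mod c) / real c" by (rule of_nat_of_nat_div_aux)
  moreover have "real (N mod c) / real c \<le> 1" using c by (simp add: divide_le_eq)
  ultimately show ?thesis by linarith
qed

lemma upper_bound:
  assumes e: "e \<ge> 1" "e \<notin> S (Suc m)" and N: "N \<ge> 1"
  shows "ratio (S (Suc (Suc m))) N \<le> 1 - 1/2^(Suc e) + 1 / real N"
proof -
  let ?G = "S (Suc (Suc m))"
  let ?I = "{1..N}"
  define W where "W = {k\<in>?I. 2^e dvd k} - {k\<in>?I. 2^(Suc e) dvd k}"
  have WI: "W \<subseteq> ?I - ?G"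
  proof
    fix k assume k: "k \<in> W"
    hence k0: "k > 0" and d: "2^e dvd k" "\<not> 2^(Suc e) dvd k" "k \<in> ?I" unfolding W_def by auto
    have "multiplicity 2 k = e" using d by (intro multiplicity_eqI) auto
    moreover have "(2::nat) dvd 2^e" using e(1) by (cases e) auto
    hence "2 dvd k" using d(1) by (rule dvd_trans)
    hence "2 \<in> prime_factors k" using k0 by (simp add: in_prime_factors_iff)
    ultimately show "k \<in> ?I - ?G" using e(2) d(3) unfolding S_G G_def by auto
  qed
  have ss: "{k\<in>?I. 2^(Suc e) dvd k} \<subseteq> {k\<in>?I. (2::nat)^e dvd k}"
    using dvd_trans[of "(2::nat)^e" "2^Suc e"] by auto
  have cW: "card W = N div 2^e - N div 2^(Suc e)"
  proof -
    have "card W = card {k\<in>?I. 2^e dvd k} - card {k\<in>?I. 2^(Suc e) dvd k}"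
      unfolding W_def by (rule card_Diff_subset[OF _ ss]) simp
    thus ?thesis by (simp only: card_multiples[of "2^e" N] card_multiples[of "2^Suc e" N] zero_less_power zero_less_numeral)
  qed
  have le: "N div 2^(Suc e) \<le> N div 2^e"
    using card_mono[OF _ ss] card_multiples[of "2^e" N] card_multiples[of "2^Suc e" N] by simp
  have w0: "real (card W) = real (N div 2^e) - real (N div 2^(Suc e))" using cW le by simp
  have a: "real N / 2^e - 1 \<le> real (N div 2^e)" using div_lower[of "2^e" N] by simp
  have b: "real (N div 2^Suc e) \<le> real N / 2^Suc e"
    using of_nat_div_le_of_nat[where 'a=real, of N "2^Suc e"] by simp
  have c: "real N / 2^e = 2 * (real N / 2^Suc e)" by simp
  have w1: "real (card W) \<ge> real N / 2^(Suc e) - 1" using w0 a b c by linarith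
  have "?G \<inter> ?I \<subseteq> ?I - W" using WI by auto
  hence "card (?G \<inter> ?I) \<le> card (?I - W)" by (intro card_mono) auto
  also have "\<dots> = N - card W"
  proof -
    have fW: "finite W" using finite_subset[OF WI] by simp
    show ?thesis using WI fW by (subst card_Diff_subset) auto
  qed
  finally have cg: "card (?G \<inter> ?I) \<le> N - card W" .
  have cw: "card W \<le> N" using card_mono[of ?I W] WI by auto
  have r0: "real (N - card W) = real N - real (card W)" using cw by (rule of_nat_diff)
  have r1: "real (card (?G \<inter> ?I)) \<le> real (N - card W)" using cg by (simp only: of_nat_le_iff)
  have "real (card (?G \<inter> ?I)) \<le> real N - real (card W)" using r0 r1 by linarith
  hence c: "real (card (?G \<inter> ?I)) \<le> real N - real N / 2^(Suc e) + 1" using w1 by linarith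
  have Np: "real N > 0" using N by simp
  have "ratio ?G N \<le> (real N - real N / 2^(Suc e) + 1) / real N"
    unfolding ratio_def using Np by (intro divide_right_mono c) simp
  also have "\<dots> = 1 - 1/2^(Suc e) + 1 / real N" using Np by (simp add: field_simps)
  finally show ?thesis .
qed

theorem mainTheorem8:
  shows "\<exists>\<delta> :: nat \<Rightarrow> real.
           (\<forall>n\<ge>1. has_density (S n) (\<delta> n)) \<and>
           \<delta> \<longlonglongrightarrow> 1 \<and>
           (\<forall>n\<ge>1. \<delta> n \<noteq> 1)"
proof -
  define \<delta> where "\<delta> n = lim (ratio (S n))" for n
  have lim: "ratio (S n) \<longlonglongrightarrow> \<delta> n" if "n \<ge> 1" for n
    using conv_S[OF that] unfolding \<delta>_def by (simp add: convergent_LIMSEQ_iff)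
  have hd: "has_density A d \<longleftrightarrow> ratio A \<longlonglongrightarrow> d" for A d
    unfolding has_density_def ratio_def ..
  have d1: "\<delta> 1 = 0" using A3_density unfolding \<delta>_def by (simp add: limI)
  have low: "1 - 1/2^(n-1) \<le> \<delta> (Suc (Suc n))" if "n \<ge> 1" for n
    by (rule LIMSEQ_le_const[OF lim]) (use lower_bound[OF that] in auto)
  have up: "\<delta> n \<le> 1" if "n \<ge> 1" for n
    by (rule LIMSEQ_le_const2[OF lim[OF that]]) (use ratio_le1 in auto)
  have conv1: "\<delta> \<longlonglongrightarrow> 1"
  proof (rule LIMSEQ_offset[of _ 3])
    have l1: "(\<lambda>n. 1 - (1/2::real)^n) \<longlonglongrightarrow> 1 - 0"
      by (intro tendsto_intros LIMSEQ_realpow_zero) auto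
    have ev1: "eventually (\<lambda>n. 1 - (1/2::real)^n \<le> \<delta> (n + 3)) sequentially"
    proof (rule always_eventually, rule allI)
      fix n
      have "1 - 1/2^(Suc n - 1) \<le> \<delta> (Suc (Suc (Suc n)))" by (rule low) simp
      thus "1 - (1/2::real)^n \<le> \<delta> (n + 3)" by (simp add: power_one_over eval_nat_numeral)
    qed
    have ev2: "eventually (\<lambda>n. \<delta> (n + 3) \<le> 1) sequentially"
      using up by (intro always_eventually) auto
    show "(\<lambda>n. \<delta> (n + 3)) \<longlonglongrightarrow> 1"
      using tendsto_sandwich[OF ev1 ev2 _ tendsto_const] l1 by simp
  qed
  have ne: "\<delta> n \<noteq> 1" if n: "n \<ge> 1" for n
  proof (cases "n = 1")
    case True thus ?thesis using d1 by simp
  next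
    case False
    have "n = Suc (Suc (n - 2))" using n False by simp
    then obtain m where m: "n = Suc (Suc m)" by blast
    obtain e where e: "e \<ge> 1" "e \<notin> S (Suc m)" using exists_notin_S[of "Suc m"] by auto
    have l2: "(\<lambda>N. 1 - 1/2^(Suc e) + 1 / real N) \<longlonglongrightarrow> 1 - 1/2^(Suc e) + 0"
      by (intro tendsto_intros lim_const_over_n)
    have "\<delta> n \<le> 1 - 1/2^(Suc e) + 0"
      by (rule LIMSEQ_le[OF lim[OF n] l2]) (use upper_bound[OF e] m in auto)
    moreover have "(0::real) < 1/2^(Suc e)" by simp
    ultimately show ?thesis by linarith
  qed
  show ?thesis
    by (intro exI[of _ \<delta>] conjI allI impI conv1) (auto simp: hd lim ne)
qed


end
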